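(* Let $a_1,a_2,a_3\in\mathbb{R}\setminus\{0\}$ and consider the connection $$\nabla=d-\Big(A_1\frac{dz}{z}+A_2\frac{dw}{w}+A_3\frac{d(z-w)}{z-w}\Big),$$ $$A_1=\begin{pmatrix}a_1&0\\ \frac{a_1+a_3-a_2}{2}&0\end{pmatrix},\quad A_2=\begin{pmatrix}0&\frac{a_2+a_3-a_1}{2}\\0&a_2\end{pmatrix},\quad A_3=\begin{pmatrix}\frac{a_2+a_3-a_1}{2}&\frac{a_1-a_2-a_3}{2}\\ \frac{a_2-a_1-a_3}{2}&\frac{a_1+a_3-a_2}{2}\end{pmatrix}$$ on the tangent bundle of $\mathbb{C}^2\setminus(\{z=0\}\cup\{w=0\}\cup\{w=z\})$ (in the frame $\partial_z,\partial_w$). Then $\nabla$ is Dunkl if and only if $|a_i|<|a_j|+|a_k|$ for all $(i,j,k)$ running over cyclic permutations of $(1,2,3)$.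
   Context: A connection of this form is Dunkl if there exists a positive definite Hermitian inner product on $\mathbb{C}^2$ with respect to which each of the residue matrices $A_1,A_2,A_3$ is self-adjoint. *)

theory Defs
  imports "HOL-Analysis.Analysis"
begin

definition pd_hermitian_inner :: "(complex^2 \<Rightarrow> complex^2 \<Rightarrow> complex) \<Rightarrow> bool" where
  "pd_hermitian_inner B \<longleftrightarrow>
     (\<forall>u v w. B (u + v) w = B u w + B v w) \<and>
     (\<forall>c u w. B (c *s u) w = c * B u w) \<and>
     (\<forall>u v. B u v = cnj (B v u)) \<and>
     (\<forall>v. v \<noteq> 0 \<longrightarrow> Re (B v v) > 0)"

definition self_adjoint_wrt :: "(complex^2 \<Rightarrow> complex^2 \<Rightarrow> complex) \<Rightarrow> complex^2^2 \<Rightarrow> bool" where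
  "self_adjoint_wrt B A \<longleftrightarrow> (\<forall>u v. B (A *v u) v = B u (A *v v))"

definition mat2 :: "complex \<Rightarrow> complex \<Rightarrow> complex \<Rightarrow> complex \<Rightarrow> complex^2^2" where
  "mat2 p q r s = (\<chi> i j. if i = 1 then (if j = 1 then p else q) else (if j = 1 then r else s))"

definition resA1 :: "real \<Rightarrow> real \<Rightarrow> real \<Rightarrow> complex^2^2" where
  "resA1 a1 a2 a3 = mat2 (of_real a1) 0 (of_real ((a1 + a3 - a2) / 2)) 0"

definition resA2 :: "real \<Rightarrow> real \<Rightarrow> real \<Rightarrow> complex^2^2" where
  "resA2 a1 a2 a3 = mat2 0 (of_real ((a2 + a3 - a1) / 2)) 0 (of_real a2)"

definition resA3 :: "real \<Rightarrow> real \<Rightarrow> real \<Rightarrow> complex^2^2" where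
  "resA3 a1 a2 a3 = mat2 (of_real ((a2 + a3 - a1) / 2)) (of_real ((a1 - a2 - a3) / 2))
                         (of_real ((a2 - a1 - a3) / 2)) (of_real ((a1 + a3 - a2) / 2))"

definition is_Dunkl :: "complex^2^2 \<Rightarrow> complex^2^2 \<Rightarrow> complex^2^2 \<Rightarrow> bool" where
  "is_Dunkl A1 A2 A3 \<longleftrightarrow> (\<exists>B. pd_hermitian_inner B \<and>
      self_adjoint_wrt B A1 \<and> self_adjoint_wrt B A2 \<and> self_adjoint_wrt B A3)"

end

theory Submission
  imports Defs
begin


lemma heron_abs:
  fixes a1 a2 a3 :: real
  shows "(a1+a2+a3)*(-a1+a2+a3)*(a1-a2+a3)*(a1+a2-a3) =
     (\<bar>a1\<bar>+\<bar>a2\<bar>+\<bar>a3\<bar>)*(-\<bar>a1\<bar>+\<bar>a2\<bar>+\<bar>a3\<bar>)*(\<bar>a1\<bar>-\<bar>a2\<bar>+\<bar>a3\<bar>)*(\<bar>a1\<bar>+\<bar>a2\<bar>-\<bar>a3\<bar>)"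
proof -
  have E: "\<And>x y z :: real. (x+y+z)*(-x+y+z)*(x-y+z)*(x+y-z) =
     2*x^2*y^2 + 2*y^2*z^2 + 2*z^2*x^2 - x^4 - y^4 - z^4"
    by (simp add: algebra_simps power2_eq_square power4_eq_xxxx)
  show ?thesis unfolding E by simp
qed

lemma heron_pos:
  fixes x y z :: real
  assumes "x > 0" "y > 0" "z > 0"
  shows "0 < (x+y+z)*(-x+y+z)*(x-y+z)*(x+y-z) \<longleftrightarrow> (x < y + z \<and> y < z + x \<and> z < x + y)"
proof
  assume "x < y + z \<and> y < z + x \<and> z < x + y"
  then show "0 < (x+y+z)*(-x+y+z)*(x-y+z)*(x+y-z)" using assms by simp
next
  assume h: "0 < (x+y+z)*(-x+y+z)*(x-y+z)*(x+y-z)"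
  have s: "x+y+z \<ge> 0" using assms by simp
  show "x < y + z \<and> y < z + x \<and> z < x + y"
  proof (rule ccontr)
    assume "\<not> ?thesis"
    then consider "-x+y+z \<le> 0" "x-y+z \<ge> 0" "x+y-z \<ge> 0" | "-x+y+z \<ge> 0" "x-y+z \<le> 0" "x+y-z \<ge> 0"
      | "-x+y+z \<ge> 0" "x-y+z \<ge> 0" "x+y-z \<le> 0" using assms by linarith
    then have "(x+y+z)*(-x+y+z)*(x-y+z)*(x+y-z) \<le> 0"
    proof cases
      case 1 then show ?thesis
        by (intro mult_nonpos_nonneg mult_nonneg_nonpos s)
    next
      case 2 then show ?thesis
        by (intro mult_nonpos_nonneg mult_nonneg_nonpos mult_nonneg_nonneg s)
    next
      case 3 then show ?thesis
        by (intro mult_nonneg_nonpos mult_nonneg_nonneg s)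
    qed
    with h show False by linarith
  qed
qed

lemma heron:
  fixes a1 a2 a3 :: real
  assumes "a1 \<noteq> 0" "a2 \<noteq> 0" "a3 \<noteq> 0"
  shows "0 < (a1+a2+a3)*(-a1+a2+a3)*(a1-a2+a3)*(a1+a2-a3) \<longleftrightarrow>
    (\<bar>a1\<bar> < \<bar>a2\<bar> + \<bar>a3\<bar> \<and> \<bar>a2\<bar> < \<bar>a3\<bar> + \<bar>a1\<bar> \<and> \<bar>a3\<bar> < \<bar>a1\<bar> + \<bar>a2\<bar>)"
  unfolding heron_abs[of a1 a2 a3] using assms by (intro heron_pos) auto

lemma real_fwd:
  fixes a1 a2 a3 p t r :: real
  assumes "a1 \<noteq> 0" "a2 \<noteq> 0" "a3 \<noteq> 0"
    and e1: "a1 * t + ((a1 + a3 - a2) / 2) * r = 0" and e2: "((a2 + a3 - a1) / 2) * p + a2 * t = 0"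
    and "p > 0" "r > 0" "p * r > t^2"
  shows "\<bar>a1\<bar> < \<bar>a2\<bar> + \<bar>a3\<bar> \<and> \<bar>a2\<bar> < \<bar>a3\<bar> + \<bar>a1\<bar> \<and> \<bar>a3\<bar> < \<bar>a1\<bar> + \<bar>a2\<bar>"
proof -
  define c where "c = (a1 + a3 - a2) / 2"
  define d where "d = (a2 + a3 - a1) / 2"
  have e1: "a1 * t + c * r = 0" using e1 unfolding c_def .
  have e2: "d * p + a2 * t = 0" using e2 unfolding d_def .
  have id: "a1^2 * d^2 * (p*r - t^2) = r^2 * (c * d * (a1 * a2 - c * d))"
  proof -
    have dp: "d*p = -(a2*t)" using e2 by linarith
    have at: "a1*t = -(c*r)" using e1 by linarith
    have X1: "a1 * d * p = c * r * a2"
    proof -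
      have "a1 * d * p = a1 * (d * p)" by (simp add: algebra_simps)
      also have "\<dots> = a1 * (-(a2 * t))" by (simp only: dp)
      also have "\<dots> = - a2 * (a1 * t)" by (simp add: algebra_simps)
      also have "\<dots> = - a2 * (-(c * r))" by (simp only: at)
      also have "\<dots> = c * r * a2" by (simp add: algebra_simps)
      finally show ?thesis .
    qed
    have A: "a1^2 * d^2 * p * r = r^2 * a1 * a2 * c * d"
    proof -
      have "a1^2*d^2*p*r = (a1*d*p)*(a1*d*r)" by (simp add: power2_eq_square algebra_simps)
      also have "\<dots> = (c*r*a2)*(a1*d*r)" using X1 by simp
      also have "\<dots> = r^2*a1*a2*c*d" by (simp add: power2_eq_square algebra_simps)
      finally show ?thesis .
    qed
    have X2: "a1 * t = - c * r" using at by simp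
    have B: "a1^2 * d^2 * t^2 = r^2 * c^2 * d^2"
    proof -
      have "a1^2*d^2*t^2 = (a1*t)^2*d^2" by (simp add: power2_eq_square algebra_simps)
      also have "\<dots> = (- c * r)^2*d^2" using X2 by simp
      also have "\<dots> = r^2*c^2*d^2" by (simp add: power2_eq_square algebra_simps)
      finally show ?thesis .
    qed
    have "a1^2*d^2*(p*r-t^2) = a1^2*d^2*p*r - a1^2*d^2*t^2" by (simp add: algebra_simps)
    also have "\<dots> = r^2*a1*a2*c*d - r^2*c^2*d^2" using A B by simp
    also have "\<dots> = r^2 * (c * d * (a1 * a2 - c * d))" by (simp add: algebra_simps power2_eq_square)
    finally show ?thesis .
  qed
  have "p*r - t^2 > 0" using assms by linarith
  have dnz: "d \<noteq> 0"
  proof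
    assume "d = 0" then have "t = 0" using e2 \<open>a2 \<noteq> 0\<close> by simp
    then have "c = 0" using e1 \<open>r > 0\<close> by simp
    with \<open>d = 0\<close> \<open>a3 \<noteq> 0\<close> show False unfolding c_def d_def by simp
  qed
  have pos: "a1^2 * d^2 * (p*r - t^2) > 0" using dnz \<open>a1 \<noteq> 0\<close> \<open>p*r - t^2 > 0\<close> by simp
  have "r^2 * (c * d * (a1 * a2 - c * d)) > 0" using pos unfolding id .
  then have "c * d * (a1 * a2 - c * d) > 0"
    using \<open>r > 0\<close> by (simp add: zero_less_mult_iff)
  moreover have "(a1+a2+a3)*(-a1+a2+a3)*(a1-a2+a3)*(a1+a2-a3) = 16 * (c * d * (a1 * a2 - c * d))"
    unfolding c_def d_def by (simp add: field_simps)
  ultimately have "0 < (a1+a2+a3)*(-a1+a2+a3)*(a1-a2+a3)*(a1+a2-a3)" by linarith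
  then show ?thesis using heron assms by blast
qed



abbreviation "e1 \<equiv> (vector [1,0] :: complex^2)"
abbreviation "e2 \<equiv> (vector [0,1] :: complex^2)"

lemma decomp: "(u::complex^2) = (u$1) *s e1 + (u$2) *s e2"
  by (simp add: vec_eq_iff forall_2)

lemma mat2_mult: "mat2 p q r s *v u = vector [p * u$1 + q * u$2, r * u$1 + s * u$2]"
  by (simp add: vec_eq_iff forall_2 mat2_def matrix_vector_mult_def sum_2)

lemma A1e1: "resA1 a1 a2 a3 *v e1 = vector [of_real a1, of_real ((a1+a3-a2)/2)]"
  by (simp add: resA1_def mat2_mult)
lemma A1e2: "resA1 a1 a2 a3 *v e2 = 0"
  by (simp add: resA1_def mat2_mult vec_eq_iff forall_2)
lemma A2e1: "resA2 a1 a2 a3 *v e1 = 0"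
  by (simp add: resA2_def mat2_mult vec_eq_iff forall_2)
lemma A2e2: "resA2 a1 a2 a3 *v e2 = vector [of_real ((a2+a3-a1)/2), of_real a2]"
  by (simp add: resA2_def mat2_mult)

lemma expand:
  assumes "pd_hermitian_inner B"
  shows "B u v = u$1 * cnj (v$1) * B e1 e1 + u$1 * cnj (v$2) * B e1 e2
               + u$2 * cnj (v$1) * B e2 e1 + u$2 * cnj (v$2) * B e2 e2"
proof -
  have add: "\<And>u v w. B (u + v) w = B u w + B v w" using assms unfolding pd_hermitian_inner_def by blast
  have sc: "\<And>c u w. B (c *s u) w = c * B u w" using assms unfolding pd_hermitian_inner_def by blast
  have cj: "\<And>u v. B u v = cnj (B v u)" using assms unfolding pd_hermitian_inner_def by blast
  have L: "B u w = u$1 * B e1 w + u$2 * B e2 w" for u w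
  proof -
    have "B u w = B ((u$1) *s e1 + (u$2) *s e2) w" by (simp only: decomp[symmetric])
    also have "\<dots> = u$1 * B e1 w + u$2 * B e2 w" by (simp only: add sc)
    finally show ?thesis .
  qed
  have R: "\<And>u w. B u w = cnj (w$1) * B u e1 + cnj (w$2) * B u e2"
  proof -
    fix u w
    have "B u w = cnj (B w u)" by (rule cj)
    also have "\<dots> = cnj (w$1 * B e1 u + w$2 * B e2 u)" using L by metis
    also have "\<dots> = cnj (w$1) * B u e1 + cnj (w$2) * B u e2"
      by (simp add: cj[of u e1] cj[of u e2])
    finally show "B u w = cnj (w$1) * B u e1 + cnj (w$2) * B u e2" .
  qed
  show ?thesis
    apply (subst L)
    apply (subst R[of e1]) apply (subst R[of e2])
    by (simp add: algebra_simps)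
qed

lemma fwd:
  fixes a1 a2 a3 :: real
  assumes "a1 \<noteq> 0" and "a2 \<noteq> 0" and "a3 \<noteq> 0"
  assumes "is_Dunkl (resA1 a1 a2 a3) (resA2 a1 a2 a3) (resA3 a1 a2 a3)"
  shows "\<bar>a1\<bar> < \<bar>a2\<bar> + \<bar>a3\<bar> \<and> \<bar>a2\<bar> < \<bar>a3\<bar> + \<bar>a1\<bar> \<and> \<bar>a3\<bar> < \<bar>a1\<bar> + \<bar>a2\<bar>"
proof -
  obtain B where pd: "pd_hermitian_inner B" and s1: "self_adjoint_wrt B (resA1 a1 a2 a3)"
    and s2: "self_adjoint_wrt B (resA2 a1 a2 a3)"
    using assms(4) unfolding is_Dunkl_def by blast
  define c where "c = (a1 + a3 - a2) / 2"
  define d where "d = (a2 + a3 - a1) / 2"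
  define P where "P = B e1 e1"
  define T where "T = B e1 e2"
  define R where "R = B e2 e2"
  have cj: "B e2 e1 = cnj T" using pd unfolding pd_hermitian_inner_def T_def by blast
  have cj': "cnj (B e1 e2) = B e2 e1" using cj T_def by simp
  have ex: "\<And>u v. B u v = u$1 * cnj (v$1) * P + u$1 * cnj (v$2) * T
               + u$2 * cnj (v$1) * cnj T + u$2 * cnj (v$2) * R"
    unfolding P_def T_def R_def cj' by (rule expand[OF pd])
  have pos: "\<And>v. v \<noteq> 0 \<Longrightarrow> Re (B v v) > 0" using pd unfolding pd_hermitian_inner_def by blast
  have "e1 \<noteq> 0"
  proof
    assume "e1 = 0" then have "e1$1 = 0" by simp
    then show False by simp
  qed
  then have pp: "Re P > 0" using pos unfolding P_def by blast
  have "e2 \<noteq> 0"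
  proof
    assume "e2 = 0" then have "e2$2 = 0" by simp
    then show False by simp
  qed
  then have rp: "Re R > 0" using pos unfolding R_def by blast
  have "B (resA1 a1 a2 a3 *v e1) e2 = B e1 (resA1 a1 a2 a3 *v e2)"
    using s1 unfolding self_adjoint_wrt_def by blast
  then have E1: "of_real a1 * T + of_real c * R = 0"
    unfolding A1e1 A1e2 ex by (simp add: c_def)
  have "B (resA2 a1 a2 a3 *v e1) e2 = B e1 (resA2 a1 a2 a3 *v e2)"
    using s2 unfolding self_adjoint_wrt_def by blast
  then have E2: "of_real d * P + of_real a2 * T = 0"
    unfolding A2e1 A2e2 ex by (simp add: d_def)
  define p where "p = Re P"
  define t where "t = Re T"
  define r where "r = Re R"
  have r1: "a1 * t + c * r = 0" using arg_cong[OF E1, of Re] by (simp add: t_def r_def)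
  have r2: "d * p + a2 * t = 0" using arg_cong[OF E2, of Re] by (simp add: t_def p_def)
  define v where "v = (vector [complex_of_real t, complex_of_real (-p)] :: complex^2)"
  have "v \<noteq> 0"
  proof
    assume "v = 0" then have "v$2 = 0" by simp
    then have "p = 0" by (simp add: v_def)
    with pp p_def show False by simp
  qed
  then have "Re (B v v) > 0" by (rule pos)
  moreover have "B v v = of_real t * of_real t * P + of_real t * of_real (-p) * T
     + of_real (-p) * of_real t * cnj T + of_real (-p) * of_real (-p) * R"
    unfolding ex by (simp add: v_def)
  moreover have "Re (of_real t * of_real t * P + of_real t * of_real (-p) * T
     + of_real (-p) * of_real t * cnj T + of_real (-p) * of_real (-p) * R)
     = t * t * p - t * p * t - p * t * t + p * p * r"
    by (simp add: p_def t_def r_def)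
  ultimately have X: "t * t * p - t * p * t - p * t * t + p * p * r > 0"
    by (simp only:)
  have pp': "p > 0" using pp unfolding p_def .
  have rp': "r > 0" using rp unfolding r_def .
  have "p * (p * r - t^2) = t * t * p - t * p * t - p * t * t + p * p * r"
    by (simp add: algebra_simps power2_eq_square)
  with X have "p * (p * r - t^2) > 0" by simp
  then have "p * r - t^2 > 0" using pp' by (simp add: zero_less_mult_iff)
  then have pr: "p * r > t^2" by simp
  have r1': "a1 * t + ((a1 + a3 - a2) / 2) * r = 0" using r1 unfolding c_def .
  have r2': "((a2 + a3 - a1) / 2) * p + a2 * t = 0" using r2 unfolding d_def .
  show ?thesis by (rule real_fwd[OF assms(1-3) r1' r2' pp' rp' pr])
qed



definition Bf :: "complex \<Rightarrow> complex \<Rightarrow> complex \<Rightarrow> complex^2 \<Rightarrow> complex^2 \<Rightarrow> complex" where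
  "Bf p t r u v = u$1 * cnj (v$1) * p + u$1 * cnj (v$2) * t + u$2 * cnj (v$1) * t + u$2 * cnj (v$2) * r"

lemma Bf_sa:
  assumes "cnj \<alpha> = \<alpha>" "cnj \<beta> = \<beta>" "cnj \<gamma> = \<gamma>" "cnj \<delta> = \<delta>"
    and h: "\<alpha> * t + \<gamma> * r = \<beta> * p + \<delta> * t"
  shows "self_adjoint_wrt (Bf p t r) (mat2 \<alpha> \<beta> \<gamma> \<delta>)"
  unfolding self_adjoint_wrt_def
proof (intro allI)
  fix u v :: "complex^2"
  have "Bf p t r (mat2 \<alpha> \<beta> \<gamma> \<delta> *v u) v - Bf p t r u (mat2 \<alpha> \<beta> \<gamma> \<delta> *v v)
     = (u$1 * cnj (v$2) - u$2 * cnj (v$1)) * ((\<alpha> * t + \<gamma> * r) - (\<beta> * p + \<delta> * t))"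
    unfolding Bf_def mat2_mult using assms(1-4) by (simp add: algebra_simps)
  then show "Bf p t r (mat2 \<alpha> \<beta> \<gamma> \<delta> *v u) v = Bf p t r u (mat2 \<alpha> \<beta> \<gamma> \<delta> *v v)"
    using h by simp
qed

lemma quad_pos:
  fixes p t x y :: real
  assumes "p > t^2" "x \<noteq> 0 \<or> y \<noteq> 0"
  shows "p * x^2 + 2 * t * x * y + y^2 > 0"
proof -
  have e: "p * x^2 + 2 * t * x * y + y^2 = (y + t * x)^2 + (p - t^2) * x^2"
    by (simp add: algebra_simps power2_eq_square)
  show ?thesis
  proof (cases "x = 0")
    case True then have "y \<noteq> 0" using assms by simp
    then show ?thesis using True by simp
  next
    case False
    then have "(p - t^2) * x^2 > 0" using assms by simp
    then show ?thesis unfolding e by (smt (verit) zero_le_power2)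
  qed
qed

lemma quad_nonneg:
  fixes p t x y :: real
  assumes "p > t^2"
  shows "p * x^2 + 2 * t * x * y + y^2 \<ge> 0"
  using quad_pos[OF assms, of x y] by (cases "x = 0 \<and> y = 0") auto

lemma Bf_pd:
  fixes p t :: real
  assumes "p > t^2"
  shows "pd_hermitian_inner (Bf (of_real p) (of_real t) 1)"
  unfolding pd_hermitian_inner_def
proof (intro conjI allI impI)
  fix u v w :: "complex^2"
  show "Bf (of_real p) (of_real t) 1 (u + v) w = Bf (of_real p) (of_real t) 1 u w + Bf (of_real p) (of_real t) 1 v w"
    unfolding Bf_def by (simp add: algebra_simps)
next
  fix c :: complex and u w :: "complex^2"
  show "Bf (of_real p) (of_real t) 1 (c *s u) w = c * Bf (of_real p) (of_real t) 1 u w"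
    unfolding Bf_def by (simp add: algebra_simps)
next
  fix u v :: "complex^2"
  show "Bf (of_real p) (of_real t) 1 u v = cnj (Bf (of_real p) (of_real t) 1 v u)"
    unfolding Bf_def by (simp add: algebra_simps)
next
  fix v :: "complex^2"
  assume "v \<noteq> 0"
  have nz: "v$1 \<noteq> 0 \<or> v$2 \<noteq> 0"
  proof (rule ccontr)
    assume "\<not> (v$1 \<noteq> 0 \<or> v$2 \<noteq> 0)"
    then have "v = 0" by (simp add: vec_eq_iff forall_2)
    with \<open>v \<noteq> 0\<close> show False by simp
  qed
  have "Re (Bf (of_real p) (of_real t) 1 v v) =
     (p * (Re (v$1))^2 + 2 * t * Re (v$1) * Re (v$2) + (Re (v$2))^2)
   + (p * (Im (v$1))^2 + 2 * t * Im (v$1) * Im (v$2) + (Im (v$2))^2)"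
    unfolding Bf_def by (simp add: algebra_simps power2_eq_square)
  moreover have "(Re (v$1) \<noteq> 0 \<or> Re (v$2) \<noteq> 0) \<or> (Im (v$1) \<noteq> 0 \<or> Im (v$2) \<noteq> 0)"
    using nz complex_eq_iff by auto
  ultimately show "Re (Bf (of_real p) (of_real t) 1 v v) > 0"
    using quad_pos[OF assms] quad_nonneg[OF assms]
    by (smt (verit))
qed



lemma Bf_sa_real:
  fixes \<alpha> \<beta> \<gamma> \<delta> p t :: real
  assumes h: "\<alpha> * t + \<gamma> = \<beta> * p + \<delta> * t"
  shows "self_adjoint_wrt (Bf (of_real p) (of_real t) 1) (mat2 (of_real \<alpha>) (of_real \<beta>) (of_real \<gamma>) (of_real \<delta>))"
proof (rule Bf_sa)
  have "complex_of_real (\<alpha> * t + \<gamma>) = complex_of_real (\<beta> * p + \<delta> * t)" using h by simp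
  then show "of_real \<alpha> * of_real t + of_real \<gamma> * 1 = of_real \<beta> * of_real p + of_real \<delta> * (of_real t :: complex)"
    by simp
qed simp_all

lemma bwd:
  fixes a1 a2 a3 :: real
  assumes "a1 \<noteq> 0" and "a2 \<noteq> 0" and "a3 \<noteq> 0"
    and tri: "\<bar>a1\<bar> < \<bar>a2\<bar> + \<bar>a3\<bar> \<and> \<bar>a2\<bar> < \<bar>a3\<bar> + \<bar>a1\<bar> \<and> \<bar>a3\<bar> < \<bar>a1\<bar> + \<bar>a2\<bar>"
  shows "is_Dunkl (resA1 a1 a2 a3) (resA2 a1 a2 a3) (resA3 a1 a2 a3)"
proof -
  define c where "c = (a1 + a3 - a2) / 2"
  define d where "d = (a2 + a3 - a1) / 2"
  have F: "(a1+a2+a3)*(-a1+a2+a3)*(a1-a2+a3)*(a1+a2-a3) = 16 * (c * d * (a1 * a2 - c * d))"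
    unfolding c_def d_def by (simp add: field_simps)
  have "0 < (a1+a2+a3)*(-a1+a2+a3)*(a1-a2+a3)*(a1+a2-a3)" using heron assms by blast
  then have K: "c * d * (a1 * a2 - c * d) > 0" unfolding F by simp
  then have cnz: "c \<noteq> 0" and dnz: "d \<noteq> 0" by auto
  define t where "t = - c / a1"
  define p where "p = a2 * c / (a1 * d)"
  have "p - t^2 = (c * d * (a1 * a2 - c * d)) / (a1^2 * d^2)"
    unfolding p_def t_def using assms(1) dnz by (simp add: field_simps power2_eq_square)
  also have "\<dots> > 0" using K assms(1) dnz by simp
  finally have pt: "p > t^2" by simp
  have h1: "a1 * t + c = 0 * p + 0 * t" unfolding t_def using assms(1) by simp
  have h2: "0 * t + 0 = d * p + a2 * t" unfolding t_def p_def using assms(1) dnz by (simp add: field_simps)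
  have cd: "a2 + c - d - a1 = 0" unfolding c_def d_def by (simp add: field_simps)
  have "d * t - c - (- d * p + c * t) = (c / a1) * (a2 + c - d - a1)"
    unfolding t_def p_def using assms(1) dnz by (simp add: field_simps)
  then have "d * t - c = - d * p + c * t" unfolding cd by simp
  moreover have "(a2 - a1 - a3) / 2 = - c" unfolding c_def minus_divide_left by (rule arg_cong[where f="\<lambda>x. x / 2"]) simp
  moreover have "(a1 - a2 - a3) / 2 = - d" unfolding d_def minus_divide_left by (rule arg_cong[where f="\<lambda>x. x / 2"]) simp
  ultimately have h3: "d * t + ((a2 - a1 - a3) / 2) = ((a1 - a2 - a3) / 2) * p + c * t" by simp
  have "resA1 a1 a2 a3 = mat2 (of_real a1) (of_real 0) (of_real c) (of_real 0)"
    unfolding resA1_def c_def by simp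
  then have s1: "self_adjoint_wrt (Bf (of_real p) (of_real t) 1) (resA1 a1 a2 a3)"
    using Bf_sa_real[OF h1] by simp
  have "resA2 a1 a2 a3 = mat2 (of_real 0) (of_real d) (of_real 0) (of_real a2)"
    unfolding resA2_def d_def by simp
  then have s2: "self_adjoint_wrt (Bf (of_real p) (of_real t) 1) (resA2 a1 a2 a3)"
    using Bf_sa_real[OF h2] by simp
  have "resA3 a1 a2 a3 = mat2 (of_real d) (of_real ((a1 - a2 - a3) / 2)) (of_real ((a2 - a1 - a3) / 2)) (of_real c)"
    unfolding resA3_def c_def d_def by simp
  then have s3: "self_adjoint_wrt (Bf (of_real p) (of_real t) 1) (resA3 a1 a2 a3)"
    using Bf_sa_real[OF h3] by simp
  show ?thesis unfolding is_Dunkl_def using Bf_pd[OF pt] s1 s2 s3 by blast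
qed


theorem lemma27:
  fixes a1 a2 a3 :: real
  assumes "a1 \<noteq> 0" and "a2 \<noteq> 0" and "a3 \<noteq> 0"
  shows "is_Dunkl (resA1 a1 a2 a3) (resA2 a1 a2 a3) (resA3 a1 a2 a3) \<longleftrightarrow>
    (\<bar>a1\<bar> < \<bar>a2\<bar> + \<bar>a3\<bar> \<and> \<bar>a2\<bar> < \<bar>a3\<bar> + \<bar>a1\<bar> \<and> \<bar>a3\<bar> < \<bar>a1\<bar> + \<bar>a2\<bar>)"
  using fwd[OF assms] bwd[OF assms] by blast

end
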